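(* Let $N=2^n$, fix a part $S_\beta$ (write $\beta=(S_\beta)$), and let $t$ be a random permutation of $\{0,\dots,N-1\}$ whose distribution is $\delta'$ non-$\beta$-uniform. Fix $\delta>0$ and $\gamma=2^{-m}$. Let $h$ be an arbitrary function on permutations and $r$ a value with $\Pr[h(t)=r]\ge\gamma$, and let $s$ denote $t$ conditioned on $h(t)=r$. Then there exist finitely many distributions $\mathbb{F}_i$, each $(p,\delta+\delta')$ non-$\beta$-uniform with $p=2m/\delta$, an arbitrary distribution $\mathbb{F}'$ on permutations and nonnegative weights $\alpha_i,\gamma'$ with $\sum_i\alpha_i+\gamma'=1$, $\gamma'\le\gamma$, such that the distribution of $s$ equals $\sum_i\alpha_i\mathbb{F}_i+\gamma'\mathbb{F}'$.
   Context: A part is a set $S=\{(x_i,y_i)\}_{i=1}^M$ such that some permutation $\pi$ of $\{0,\dots,N-1\}$ has $\pi(x_i)=y_i$ for all $i$; "$S\subseteq\mathrm{parts}(t)$" means $t(x_i)=y_i$ for all $i$. Parts $S,S'$ are distinct if they share no input and $S\cup S'$ is a part. Let $u$ be a uniformly random permutation. The $\beta$-uniform distribution (for $\beta=(S_\beta)$) is the law of $b:=u$ conditioned on $S_\beta\subseteq\mathrm{parts}(u)$. A random permutation $t$ is $\delta$ non-$\beta$-uniform if $\Pr[S\subseteq\mathrm{parts}(t)]\le2^{\delta|S|}\Pr[S\subseteq\mathrm{parts}(b)]$ for every part $S$. It is $(p,\delta)$ non-$\beta$-uniform if there is a part $S_0$ with $|S_0|\le p$ and $\Pr[S_0\subseteq\mathrm{parts}(t)]=1$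 such that for every part $S$ distinct from $S_0$, $\Pr[S\subseteq\mathrm{parts}(t)]\le2^{\delta|S|}\Pr[S\subseteq\mathrm{parts}(b)\mid S_0\subseteq\mathrm{parts}(b)]$. *)

theory Defs
  imports "HOL-Probability.Probability" "HOL-Combinatorics.Permutations"
begin

definition perms :: "nat \<Rightarrow> (nat \<Rightarrow> nat) set" where
  "perms N = {f. f permutes {..<N}}"

definition is_part :: "nat \<Rightarrow> (nat \<times> nat) set \<Rightarrow> bool" where
  "is_part N S \<longleftrightarrow> finite S \<and> (\<exists>\<pi>\<in>perms N. \<forall>(x,y)\<in>S. \<pi> x = y)"

definition in_parts :: "(nat \<times> nat) set \<Rightarrow> (nat \<Rightarrow> nat) \<Rightarrow> bool" where
  "in_parts S t \<longleftrightarrow> (\<forall>(x,y)\<in>S. t x = y)"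

definition distinct_parts :: "nat \<Rightarrow> (nat \<times> nat) set \<Rightarrow> (nat \<times> nat) set \<Rightarrow> bool" where
  "distinct_parts N S S' \<longleftrightarrow> fst ` S \<inter> fst ` S' = {} \<and> is_part N (S \<union> S')"

definition uniform_perm :: "nat \<Rightarrow> (nat \<Rightarrow> nat) pmf" where
  "uniform_perm N = pmf_of_set (perms N)"

definition beta_uniform :: "nat \<Rightarrow> (nat \<times> nat) set \<Rightarrow> (nat \<Rightarrow> nat) pmf" where
  "beta_uniform N Sb = cond_pmf (uniform_perm N) {f. in_parts Sb f}"

definition Pr_part :: "(nat \<Rightarrow> nat) pmf \<Rightarrow> (nat \<times> nat) set \<Rightarrow> real" where
  "Pr_part D S = measure_pmf.prob D {f. in_parts S f}"

definition Pr_part_cond :: "(nat \<Rightarrow> nat) pmf \<Rightarrow> (nat \<times> nat) set \<Rightarrow> (nat \<times> nat) set \<Rightarrow> real" where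
  "Pr_part_cond D S S0 =
     measure_pmf.prob D {f. in_parts S f \<and> in_parts S0 f} / measure_pmf.prob D {f. in_parts S0 f}"

definition non_beta_uniform :: "nat \<Rightarrow> (nat \<times> nat) set \<Rightarrow> real \<Rightarrow> (nat \<Rightarrow> nat) pmf \<Rightarrow> bool" where
  "non_beta_uniform N Sb \<delta> t \<longleftrightarrow>
     (\<forall>S. is_part N S \<longrightarrow>
        Pr_part t S \<le> 2 powr (\<delta> * real (card S)) * Pr_part (beta_uniform N Sb) S)"

definition p_non_beta_uniform ::
  "nat \<Rightarrow> (nat \<times> nat) set \<Rightarrow> real \<Rightarrow> real \<Rightarrow> (nat \<Rightarrow> nat) pmf \<Rightarrow> bool" where
  "p_non_beta_uniform N Sb p \<delta> t \<longleftrightarrow>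
     (\<exists>S0. is_part N S0 \<and> real (card S0) \<le> p \<and> Pr_part t S0 = 1 \<and>
        (\<forall>S. is_part N S \<longrightarrow> distinct_parts N S S0 \<longrightarrow>
           Pr_part t S \<le> 2 powr (\<delta> * real (card S)) * Pr_part_cond (beta_uniform N Sb) S S0))"

end

theory Submission
  imports Defs
begin

lemma measure_cond_pmf':
  assumes "set_pmf p \<inter> s \<noteq> {}"
  shows "measure_pmf.prob (cond_pmf p s) X = measure_pmf.prob p (s \<inter> X) / measure_pmf.prob p s"
proof -
  have "measure_pmf (cond_pmf p s) = uniform_measure (measure_pmf p) s"
    by (rule cond_pmf.rep_eq[OF assms])
  moreover have "emeasure (measure_pmf p) s \<noteq> 0"
    using assms by (simp add: emeasure_measure_pmf_not_zero)
  ultimately show ?thesis by simp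
qed

lemma prob_one_if_supp:
  assumes "set_pmf p \<subseteq> X" shows "measure_pmf.prob p X = 1"
  using assms by (subst measure_pmf.prob_eq_1) (auto simp: AE_measure_pmf_iff)

lemma finite_perms: "finite (perms N)"
  unfolding perms_def by (rule finite_permutations) simp

lemma id_perms: "id \<in> perms N"
  unfolding perms_def by simp

definition EE :: "(nat \<times> nat) set \<Rightarrow> (nat \<Rightarrow> nat) set" where
  "EE S = {f. in_parts S f}"

definition box :: "nat \<Rightarrow> (nat \<times> nat) set" where
  "box N = {..<N} \<times> {..<N}"

lemma outside_box:
  assumes "is_part N U" "(x,y) \<in> U" "(x,y) \<notin> box N"
  shows "y = x \<and> x \<ge> N"
proof -
  obtain \<pi> where \<pi>: "\<pi> permutes {..<N}" "\<forall>(x,y)\<in>U. \<pi> x = y"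
    using assms(1) unfolding is_part_def perms_def by auto
  have y: "\<pi> x = y" using \<pi>(2) assms(2) by auto
  show ?thesis
  proof (cases "x < N")
    case True
    then have "y < N" using y permutes_in_image[OF \<pi>(1)] by auto
    then show ?thesis using True assms(3) by (auto simp: box_def)
  next
    case False
    then show ?thesis using y permutes_not_in[OF \<pi>(1)] by auto
  qed
qed

lemma EE_box:
  assumes "is_part N U" "f \<in> perms N"
  shows "f \<in> EE U \<longleftrightarrow> f \<in> EE (U \<inter> box N)"
proof -
  have fp: "f permutes {..<N}" using assms(2) by (simp add: perms_def)
  have "f x = y" if "(x,y) \<in> U" "(x,y) \<notin> box N" for x y
    using outside_box[OF assms(1) that] permutes_not_in[OF fp] by auto
  then have "(\<forall>(x,y)\<in>U. f x = y) \<longleftrightarrow> (\<forall>(x,y)\<in>U \<inter> box N. f x = y)"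
    by (smt (verit, best) Int_iff case_prodE case_prodI2)
  then show ?thesis unfolding EE_def in_parts_def by simp
qed

lemma prob_EE_box:
  assumes "is_part N U" "set_pmf p \<subseteq> perms N"
  shows "measure_pmf.prob p (A \<inter> EE U) = measure_pmf.prob p (A \<inter> EE (U \<inter> box N))"
proof -
  have "A \<inter> EE U \<inter> set_pmf p = A \<inter> EE (U \<inter> box N) \<inter> set_pmf p"
    using EE_box[OF assms(1)] assms(2) by blast
  then show ?thesis by (metis measure_Int_set_pmf)
qed

lemma is_part_subset:
  assumes "is_part N U" "V \<subseteq> U" shows "is_part N V"
  using assms unfolding is_part_def by (meson finite_subset subsetD)


lemma in_parts_Un: "in_parts (S \<union> T) f \<longleftrightarrow> in_parts S f \<and> in_parts T f"
  unfolding in_parts_def ball_Un by simp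

lemma aux1:
  fixes G B a :: real
  assumes "G > 0" "B > 0" "G * (a * B) < B / G" shows "G * G * a < 1"
proof -
  have "G * (G * (a * B)) < G * (B / G)" using assms by (intro mult_strict_left_mono) auto
  then have "(G * G * a) * B < 1 * B" using assms by (simp add: mult.assoc)
  then show ?thesis using assms(2) by (simp only: mult_less_cancel_right)
qed

lemma aux2:
  fixes K P \<mu> X Q :: real
  assumes "K > 0" "P > 0" shows "\<mu> / (K * P) * (X * K * Q) = \<mu> * (X * (Q / P))"
  using assms by (simp add: field_simps)

locale dec =
  fixes N :: nat and Sb :: "(nat \<times> nat) set" and s :: "(nat \<Rightarrow> nat) pmf"
    and m :: nat and \<delta> \<delta>' \<gamma> :: real
  assumes s_perm: "set_pmf s \<subseteq> perms N"
    and b_perm: "set_pmf (beta_uniform N Sb) \<subseteq> perms N"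
    and dpos: "\<delta> > 0" and d'nn: "\<delta>' \<ge> 0"
    and gam: "\<gamma> = 2 powr (- real m)"
    and bnd: "\<And>S. is_part N S \<Longrightarrow>
       Pr_part s S \<le> 2 powr (\<delta>' * real (card S)) * Pr_part (beta_uniform N Sb) S / \<gamma>"
begin

abbreviation "b \<equiv> beta_uniform N Sb"
abbreviation "c \<equiv> \<delta> + \<delta>'"

definition \<rho> :: "(nat \<Rightarrow> nat) set \<Rightarrow> (nat \<times> nat) set \<Rightarrow> real" where
  "\<rho> A S = measure_pmf.prob s (A \<inter> EE S) / (2 powr (c * real (card S)) * Pr_part b S)"

definition Q :: "(nat \<times> nat) set set" where
  "Q = {S. S \<subseteq> box N \<and> is_part N S \<and> Pr_part b S > 0}"

lemma finite_Q: "finite Q"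
proof -
  have "Q \<subseteq> Pow (box N)" unfolding Q_def by auto
  moreover have "finite (box N)" unfolding box_def by simp
  ultimately show ?thesis by (meson finite_Pow_iff finite_subset)
qed

lemma ip_empty: "Collect (in_parts {}) = UNIV" by (auto simp: in_parts_def)

lemma EE_empty: "EE {} = UNIV" unfolding EE_def in_parts_def by simp

lemma empty_Q: "{} \<in> Q"
proof -
  have "is_part N {}" unfolding is_part_def using id_perms by auto
  moreover have "Collect (in_parts {}) = UNIV" by (auto simp: in_parts_def)
  then have "Pr_part b {} = 1" unfolding Pr_part_def by simp
  ultimately show ?thesis unfolding Q_def by auto
qed

lemma gpos: "\<gamma> > 0" using gam by simp

lemma step:
  assumes A: "measure_pmf.prob s A > \<gamma>"
  obtains S0 where "is_part N S0" "real (card S0) \<le> 2 * real m / \<delta>"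
    "measure_pmf.prob s (A \<inter> EE S0) > 0"
    "p_non_beta_uniform N Sb (2 * real m / \<delta>) (\<delta> + \<delta>') (cond_pmf s (A \<inter> EE S0))"
proof -
  define M where "M = Max (\<rho> A ` Q)"
  have "M \<in> \<rho> A ` Q" unfolding M_def using finite_Q empty_Q by (intro Max_in) auto
  then obtain S0 where S0Q: "S0 \<in> Q" and MS0: "M = \<rho> A S0" by auto
  have maxi: "\<rho> A S \<le> \<rho> A S0" if "S \<in> Q" for S
    using that finite_Q MS0 unfolding M_def by (metis Max_ge finite_imageI imageI)
  have r0: "\<rho> A {} = measure_pmf.prob s A"
    unfolding \<rho>_def Pr_part_def by (simp add: EE_empty ip_empty)
  have S0part: "is_part N S0" and P0pos: "Pr_part b S0 > 0" using S0Q unfolding Q_def by auto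
  define P0 where "P0 = Pr_part b S0"
  define K0 where "K0 = 2 powr (c * real (card S0))"
  define \<mu>0 where "\<mu>0 = measure_pmf.prob s (A \<inter> EE S0)"
  have K0pos: "K0 > 0" unfolding K0_def by simp
  have P0p: "P0 > 0" using P0pos P0_def by simp
  have rge: "\<rho> A S0 \<ge> measure_pmf.prob s A" using maxi[OF empty_Q] r0 by simp
  have rdef: "\<rho> A S0 = \<mu>0 / (K0 * P0)" unfolding \<rho>_def \<mu>0_def K0_def P0_def by simp
  have ge: "measure_pmf.prob s A * (K0 * P0) \<le> \<mu>0"
    using rge rdef K0pos P0p by (simp add: pos_le_divide_eq)
  have mu0pos: "\<mu>0 > 0"
  proof -
    have "0 < measure_pmf.prob s A * (K0 * P0)" using A gpos K0pos P0p by simp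
    then show ?thesis using ge by linarith
  qed
  have mu_le: "\<mu>0 \<le> 2 powr (\<delta>' * real (card S0)) * P0 / \<gamma>"
  proof -
    have "\<mu>0 \<le> Pr_part s S0" unfolding \<mu>0_def Pr_part_def EE_def
      by (rule measure_pmf.finite_measure_mono) auto
    then show ?thesis using bnd[OF S0part] P0_def by simp
  qed
  have card_bd: "real (card S0) \<le> 2 * real m / \<delta>"
  proof -
    define k where "k = real (card S0)"
    have K0e: "K0 = 2 powr (\<delta> * k) * 2 powr (\<delta>' * k)"
      unfolding K0_def k_def by (simp add: distrib_right powr_add)
    have "\<gamma> * (K0 * P0) < 2 powr (\<delta>' * k) * P0 / \<gamma>"
    proof -
      have "\<gamma> * (K0 * P0) < measure_pmf.prob s A * (K0 * P0)"
        using A K0pos P0p by simp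
      also have "\<dots> \<le> 2 powr (\<delta>' * k) * P0 / \<gamma>" using ge mu_le unfolding k_def by linarith
      finally show ?thesis .
    qed
    then have "\<gamma> * (2 powr (\<delta> * k) * (2 powr (\<delta>' * k) * P0)) < 2 powr (\<delta>' * k) * P0 / \<gamma>"
      using K0e by (simp add: mult.assoc)
    then have "\<gamma> * \<gamma> * 2 powr (\<delta> * k) < 1"
      using gpos P0p by (intro aux1[of \<gamma> "2 powr (\<delta>' * k) * P0"]) auto
    moreover have "\<gamma> * \<gamma> * 2 powr (\<delta> * k) = 2 powr (\<delta> * k - 2 * real m)"
      unfolding gam by (simp add: powr_add[symmetric] powr_diff)
    ultimately have "2 powr (\<delta> * k - 2 * real m) < 2 powr 0" by simp
    then have "\<delta> * k - 2 * real m < 0" by (simp only: powr_less_cancel_iff one_less_numeral_iff semiring_norm(76))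
    then have "k * \<delta> \<le> 2 * real m" by (simp add: mult.commute)
    then show ?thesis using dpos unfolding k_def by (simp add: pos_le_divide_eq)
  qed
  have ne: "set_pmf s \<inter> (A \<inter> EE S0) \<noteq> {}"
    using mu0pos unfolding \<mu>0_def by (metis measure_pmf_zero_iff less_irrefl)
  define F where "F = cond_pmf s (A \<inter> EE S0)"
  have PrF: "Pr_part F S = measure_pmf.prob s (A \<inter> EE S0 \<inter> EE S) / \<mu>0" for S
    unfolding F_def Pr_part_def \<mu>0_def using measure_cond_pmf'[OF ne] by (simp add: EE_def)
  have "p_non_beta_uniform N Sb (2 * real m / \<delta>) (\<delta> + \<delta>') F"
    unfolding p_non_beta_uniform_def
  proof (intro exI[where x=S0] conjI allI impI)
    show "is_part N S0" by fact
    show "real (card S0) \<le> 2 * real m / \<delta>" by fact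
    show "Pr_part F S0 = 1" using PrF[of S0] mu0pos unfolding \<mu>0_def by (simp add: Int_assoc)
  next
    fix S assume Sp: "is_part N S" and dis: "distinct_parts N S S0"
    define U where "U = S \<union> S0"
    have Upart: "is_part N U" using dis unfolding distinct_parts_def U_def by simp
    have EU: "EE S0 \<inter> EE S = EE U" unfolding EE_def U_def in_parts_Un by auto
    have EU': "{f. in_parts S f \<and> in_parts S0 f} = EE U" unfolding EE_def U_def in_parts_Un by auto
    have fin: "finite S" "finite S0" using Sp S0part unfolding is_part_def by auto
    have disj: "S \<inter> S0 = {}" using dis unfolding distinct_parts_def by force
    have cardU: "card U = card S + card S0" unfolding U_def using fin disj by (simp add: card_Un_disjoint)
    define PU where "PU = measure_pmf.prob b (EE U)"
    have cond_eq: "Pr_part_cond b S S0 = PU / P0"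
      unfolding Pr_part_cond_def PU_def P0_def Pr_part_def EU' by (simp add: EE_def)
    have lhs: "Pr_part F S = measure_pmf.prob s (A \<inter> EE U) / \<mu>0"
      using PrF[of S] EU by (simp add: Int_assoc)
    show "Pr_part F S \<le> 2 powr ((\<delta> + \<delta>') * real (card S)) * Pr_part_cond b S S0"
    proof (cases "PU = 0")
      case True
      have "measure_pmf.prob s (A \<inter> EE U) \<le> Pr_part s U" unfolding Pr_part_def EE_def
        by (rule measure_pmf.finite_measure_mono) auto
      also have "\<dots> \<le> 0" using bnd[OF Upart] True unfolding PU_def Pr_part_def EE_def by simp
      finally have "measure_pmf.prob s (A \<inter> EE U) = 0" by (simp add: order_antisym)
      then show ?thesis using lhs cond_eq True by simp
    next
      case False
      then have PUp: "PU > 0" unfolding PU_def by (simp add: order_less_le)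
      define U' where "U' = U \<inter> box N"
      have U'part: "is_part N U'" using is_part_subset[OF Upart] U'_def by auto
      have PU': "Pr_part b U' = PU"
        using prob_EE_box[OF Upart b_perm, of UNIV] unfolding PU_def Pr_part_def U'_def EE_def by simp
      have U'Q: "U' \<in> Q" unfolding Q_def using U'part PU' PUp U'_def by auto
      have sU: "measure_pmf.prob s (A \<inter> EE U') = measure_pmf.prob s (A \<inter> EE U)"
        using prob_EE_box[OF Upart s_perm, of A] U'_def by simp
      have cardU': "card U' \<le> card U" unfolding U'_def
        using fin U_def by (intro card_mono) auto
      define X where "X = measure_pmf.prob s (A \<inter> EE U)"
      have "X / (2 powr (c * real (card U')) * PU) \<le> \<mu>0 / (K0 * P0)"
        using maxi[OF U'Q] rdef sU PU' unfolding \<rho>_def X_def by simp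
      then have "X \<le> \<mu>0 / (K0 * P0) * (2 powr (c * real (card U')) * PU)"
        using PUp by (simp add: pos_divide_le_eq)
      also have "\<dots> \<le> \<mu>0 / (K0 * P0) * (2 powr (c * real (card U)) * PU)"
      proof -
        have "c \<ge> 0" using dpos d'nn by simp
        then have "2 powr (c * real (card U')) \<le> 2 powr (c * real (card U))"
          using cardU' by (intro powr_mono mult_left_mono) auto
        then show ?thesis using mu0pos K0pos P0p PUp by (intro mult_left_mono mult_right_mono) auto
      qed
      also have "\<dots> = \<mu>0 * (2 powr (c * real (card S)) * (PU / P0))"
        unfolding K0_def cardU using P0p
        by (simp add: distrib_left powr_add aux2 mult.assoc)
      finally have "X / \<mu>0 \<le> 2 powr (c * real (card S)) * (PU / P0)"
        using mu0pos by (simp add: pos_divide_le_eq mult.commute)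
      then show ?thesis using lhs cond_eq X_def by simp
    qed
  qed
  then show ?thesis using that S0part card_bd mu0pos unfolding F_def \<mu>0_def by blast
qed


lemma decomp:
  "\<exists>(k::nat) (F :: nat \<Rightarrow> (nat \<Rightarrow> nat) pmf) (\<alpha> :: nat \<Rightarrow> real)
            (F' :: (nat \<Rightarrow> nat) pmf) (\<gamma>' :: real).
      (\<forall>i<k. set_pmf (F i) \<subseteq> perms N \<and>
              p_non_beta_uniform N Sb (2 * real m / \<delta>) (\<delta> + \<delta>') (F i) \<and> \<alpha> i \<ge> 0) \<and>
      set_pmf F' \<subseteq> perms N \<and> \<gamma>' \<ge> 0 \<and>
      (\<Sum>i<k. \<alpha> i) + \<gamma>' = measure_pmf.prob s A \<and> \<gamma>' \<le> \<gamma> \<and>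
      (\<forall>x. pmf s x * indicator A x = (\<Sum>i<k. \<alpha> i * pmf (F i) x) + \<gamma>' * pmf F' x)"
proof (induction "card (A \<inter> set_pmf s)" arbitrary: A rule: less_induct)
  case less
  show ?case
  proof (cases "measure_pmf.prob s A \<le> \<gamma>")
    case True
    show ?thesis
    proof (cases "set_pmf s \<inter> A = {}")
      case True2: True
      have z: "measure_pmf.prob s A = 0" using True2 by (simp add: measure_pmf_zero_iff)
      have "pmf s x * indicator A x = 0" for x
        using True2 by (cases "x \<in> A") (auto simp: set_pmf_iff)
      note facts = this z gpos id_perms
      show ?thesis
        apply (rule exI[where x="0::nat"])
        apply (rule exI[where x="\<lambda>_::nat. return_pmf (id::nat\<Rightarrow>nat)"])
        apply (rule exI[where x="\<lambda>_::nat. 0::real"])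
        apply (rule exI[where x="return_pmf (id::nat\<Rightarrow>nat)"])
        apply (rule exI[where x="0::real"])
        using facts by auto
    next
      case False
      have pos: "measure_pmf.prob s A > 0" using False
        by (metis measure_pmf_zero_iff inf_commute measure_nonneg order_less_le)
      have "pmf s x * indicator A x = measure_pmf.prob s A * pmf (cond_pmf s A) x" for x
        using pos by (simp add: pmf_cond[OF False] indicator_def)
      moreover have "set_pmf (cond_pmf s A) \<subseteq> perms N" using s_perm set_cond_pmf[OF False] by auto
      ultimately show ?thesis using True pos
        by (intro exI[where x=0] exI[where x="\<lambda>_. return_pmf id"] exI[where x="\<lambda>_. 0"]
               exI[where x="cond_pmf s A"] exI[where x="measure_pmf.prob s A"]) auto
    qed
  next
    case False
    then obtain S0 where S0: "is_part N S0" "real (card S0) \<le> 2 * real m / \<delta>"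
      "measure_pmf.prob s (A \<inter> EE S0) > 0"
      "p_non_beta_uniform N Sb (2 * real m / \<delta>) (\<delta> + \<delta>') (cond_pmf s (A \<inter> EE S0))"
      using step by (metis not_le)
    define E where "E = A \<inter> EE S0"
    define A' where "A' = A - EE S0"
    define \<mu> where "\<mu> = measure_pmf.prob s E"
    have ne: "set_pmf s \<inter> E \<noteq> {}" using S0(3) unfolding E_def
      by (metis measure_pmf_zero_iff less_irrefl)
    have fin: "finite (A \<inter> set_pmf s)" using s_perm finite_perms by (meson finite_subset inf_le2 order_trans)
    have "A' \<inter> set_pmf s \<subset> A \<inter> set_pmf s" using ne unfolding A'_def E_def by auto
    then have "card (A' \<inter> set_pmf s) < card (A \<inter> set_pmf s)" using fin by (rule psubset_card_mono[rotated])
    from less[OF this] obtain k :: nat and F :: "nat \<Rightarrow> (nat \<Rightarrow> nat) pmf" and \<alpha> :: "nat \<Rightarrow> real"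
      and F' :: "(nat \<Rightarrow> nat) pmf" and \<gamma>' :: real where IH:
      "\<forall>i<k. set_pmf (F i) \<subseteq> perms N \<and>
              p_non_beta_uniform N Sb (2 * real m / \<delta>) (\<delta> + \<delta>') (F i) \<and> \<alpha> i \<ge> 0"
      "set_pmf F' \<subseteq> perms N" "\<gamma>' \<ge> 0"
      "(\<Sum>i<k. \<alpha> i) + \<gamma>' = measure_pmf.prob s A'" "\<gamma>' \<le> \<gamma>"
      "\<forall>x. pmf s x * indicator A' x = (\<Sum>i<k. \<alpha> i * pmf (F i) x) + \<gamma>' * pmf F' x"
      by blast
    define F2 where "F2 = F(k := cond_pmf s E)"
    define \<alpha>2 where "\<alpha>2 = \<alpha>(k := \<mu>)"
    have sumF: "(\<Sum>i<Suc k. \<alpha>2 i * pmf (F2 i) x) = (\<Sum>i<k. \<alpha> i * pmf (F i) x) + \<mu> * pmf (cond_pmf s E) x" for x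
      unfolding F2_def \<alpha>2_def by (simp add: lessThan_Suc)
    have suma: "(\<Sum>i<Suc k. \<alpha>2 i) = (\<Sum>i<k. \<alpha> i) + \<mu>"
      unfolding \<alpha>2_def by (simp add: lessThan_Suc)
    have split: "measure_pmf.prob s A = measure_pmf.prob s A' + \<mu>"
    proof -
      have "A = A' \<union> E" "A' \<inter> E = {}" unfolding A'_def E_def by auto
      then show ?thesis unfolding \<mu>_def by (metis measure_pmf.finite_measure_Union sets_measure_pmf UNIV_I)
    qed
    have pm: "pmf s x * indicator A x = pmf s x * indicator A' x + \<mu> * pmf (cond_pmf s E) x" for x
      using S0(3) unfolding \<mu>_def E_def A'_def
      by (simp add: pmf_cond[OF ne[unfolded E_def]] indicator_def)
    have Fnew: "set_pmf (cond_pmf s E) \<subseteq> perms N" using s_perm set_cond_pmf[OF ne] by auto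
    have "\<forall>i<Suc k. set_pmf (F2 i) \<subseteq> perms N \<and>
              p_non_beta_uniform N Sb (2 * real m / \<delta>) (\<delta> + \<delta>') (F2 i) \<and> \<alpha>2 i \<ge> 0"
      using IH(1) Fnew S0(3,4) unfolding F2_def \<alpha>2_def \<mu>_def E_def
      by (auto simp: less_Suc_eq)
    then show ?thesis using IH(2-6) sumF suma split pm
      by (intro exI[where x="Suc k"] exI[where x=F2] exI[where x=\<alpha>2] exI[where x=F'] exI[where x=\<gamma>']) auto
  qed
qed

end
theorem mainTheorem10:
  fixes n m :: nat and N :: nat and Sb :: "(nat \<times> nat) set"
    and t :: "(nat \<Rightarrow> nat) pmf" and \<delta> \<delta>' \<gamma> :: real
    and h :: "(nat \<Rightarrow> nat) \<Rightarrow> 'b" and r :: 'b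
  assumes N_def: "N = 2 ^ n"
    and Sb_part: "is_part N Sb"
    and t_perm: "set_pmf t \<subseteq> perms N"
    and t_nbu: "non_beta_uniform N Sb \<delta>' t"
    and delta_pos: "\<delta> > 0"
    and gamma_def: "\<gamma> = 2 powr (- real m)"
    and prob_r: "measure_pmf.prob t {f. h f = r} \<ge> \<gamma>"
  shows "\<exists>(k::nat) (F :: nat \<Rightarrow> (nat \<Rightarrow> nat) pmf) (\<alpha> :: nat \<Rightarrow> real)
            (F' :: (nat \<Rightarrow> nat) pmf) (\<gamma>' :: real).
      (\<forall>i<k. set_pmf (F i) \<subseteq> perms N \<and>
              p_non_beta_uniform N Sb (2 * real m / \<delta>) (\<delta> + \<delta>') (F i) \<and> \<alpha> i \<ge> 0) \<and>
      set_pmf F' \<subseteq> perms N \<and> \<gamma>' \<ge> 0 \<and>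
      (\<Sum>i<k. \<alpha> i) + \<gamma>' = 1 \<and> \<gamma>' \<le> \<gamma> \<and>
      (\<forall>x. pmf (cond_pmf t {f. h f = r}) x = (\<Sum>i<k. \<alpha> i * pmf (F i) x) + \<gamma>' * pmf F' x)"
proof -
  define H where "H = {f. h f = r}"
  define s where "s = cond_pmf t H"
  have gpos: "\<gamma> > 0" using gamma_def by simp
  have Hpos: "measure_pmf.prob t H > 0" using prob_r gpos H_def by simp
  have neH: "set_pmf t \<inter> H \<noteq> {}" using Hpos by (metis measure_pmf_zero_iff less_irrefl)
  have s_perm: "set_pmf s \<subseteq> perms N" using t_perm set_cond_pmf[OF neH] s_def by auto
  have neb: "set_pmf (uniform_perm N) \<inter> {f. in_parts Sb f} \<noteq> {}"
  proof -
    obtain \<pi> where "\<pi> \<in> perms N" "\<forall>(x,y)\<in>Sb. \<pi> x = y" using Sb_part unfolding is_part_def by auto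
    moreover have "set_pmf (uniform_perm N) = perms N"
      unfolding uniform_perm_def using finite_perms id_perms by (intro set_pmf_of_set) auto
    ultimately show ?thesis unfolding in_parts_def by auto
  qed
  have unif: "set_pmf (uniform_perm N) = perms N"
    unfolding uniform_perm_def using finite_perms id_perms by (intro set_pmf_of_set) auto
  have b_perm: "set_pmf (beta_uniform N Sb) \<subseteq> perms N"
    unfolding beta_uniform_def using set_cond_pmf[OF neb] unif by auto
  have d'nn: "\<delta>' \<ge> 0"
  proof -
    have pt: "is_part N {(N,N)}" unfolding is_part_def by (auto intro!: bexI[where x=id] simp: id_perms)
    have sub: "perms N \<subseteq> {f. in_parts {(N,N)} f}"
      unfolding perms_def in_parts_def by (auto intro: permutes_not_in)
    have "Pr_part t {(N,N)} = 1" unfolding Pr_part_def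
      using t_perm sub by (intro prob_one_if_supp) auto
    moreover have "Pr_part (beta_uniform N Sb) {(N,N)} = 1" unfolding Pr_part_def
      using b_perm sub by (intro prob_one_if_supp) auto
    moreover have "Pr_part t {(N,N)} \<le> 2 powr (\<delta>' * real (card {(N,N)})) * Pr_part (beta_uniform N Sb) {(N,N)}"
      using t_nbu pt unfolding non_beta_uniform_def by blast
    ultimately have one: "1 \<le> 2 powr \<delta>'" by simp
    show ?thesis
    proof (rule ccontr)
      assume "\<not> \<delta>' \<ge> 0"
      then have "2 powr \<delta>' < 2 powr 0" by (intro powr_less_mono) auto
      then show False using one by simp
    qed
  qed
  have bnd: "Pr_part s S \<le> 2 powr (\<delta>' * real (card S)) * Pr_part (beta_uniform N Sb) S / \<gamma>"
    if Sp: "is_part N S" for S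
  proof -
    have "Pr_part s S = measure_pmf.prob t (H \<inter> {f. in_parts S f}) / measure_pmf.prob t H"
      unfolding Pr_part_def s_def using measure_cond_pmf'[OF neH] by simp
    also have "\<dots> \<le> measure_pmf.prob t {f. in_parts S f} / \<gamma>"
    proof (rule frac_le)
      show "measure_pmf.prob t (H \<inter> {f. in_parts S f}) \<le> measure_pmf.prob t {f. in_parts S f}"
        by (rule measure_pmf.finite_measure_mono) auto
      show "\<gamma> \<le> measure_pmf.prob t H" using prob_r H_def by simp
    qed (use gpos in auto)
    also have "\<dots> \<le> 2 powr (\<delta>' * real (card S)) * Pr_part (beta_uniform N Sb) S / \<gamma>"
      using t_nbu Sp gpos unfolding non_beta_uniform_def Pr_part_def by (simp add: divide_right_mono)
    finally show ?thesis .
  qed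
  interpret dec N Sb s m \<delta> \<delta>' \<gamma>
    using s_perm b_perm delta_pos d'nn gamma_def bnd by unfold_locales auto
  obtain k :: nat and F :: "nat \<Rightarrow> (nat \<Rightarrow> nat) pmf" and \<alpha> :: "nat \<Rightarrow> real"
      and F' :: "(nat \<Rightarrow> nat) pmf" and \<gamma>' :: real where D:
      "\<forall>i<k. set_pmf (F i) \<subseteq> perms N \<and>
              p_non_beta_uniform N Sb (2 * real m / \<delta>) (\<delta> + \<delta>') (F i) \<and> \<alpha> i \<ge> 0"
      "set_pmf F' \<subseteq> perms N" "\<gamma>' \<ge> 0"
      "(\<Sum>i<k. \<alpha> i) + \<gamma>' = measure_pmf.prob s UNIV" "\<gamma>' \<le> \<gamma>"
      "\<forall>x. pmf s x * indicator UNIV x = (\<Sum>i<k. \<alpha> i * pmf (F i) x) + \<gamma>' * pmf F' x"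
    using decomp[of UNIV] by blast
  show ?thesis
    apply (rule exI[where x=k])
    apply (rule exI[where x=F])
    apply (rule exI[where x=\<alpha>])
    apply (rule exI[where x=F'])
    apply (rule exI[where x=\<gamma>'])
    using D unfolding s_def H_def by simp
qed

end
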